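(* Let $\ell(\bm{w},\bm{x},y)$ be differentiable in $\bm{w}\in\mathbb{R}^d$ with $\|\nabla_{\bm{w}}\ell(\bm{w},\bm{x},y)\|\le G(\bm{x},y)$ for all $\bm{w}\in\mathbb{R}^d$ and all samples, for some function $G(\bm{x},y)\ge0$. Let $\{(\bm{x}_i,y_i)\}_{i=1}^n$ be a dataset, $f_i(\bm{w})=\ell(\bm{w},\bm{x}_i,y_i)$, $f=\frac1n\sum_if_i$, let $\bm{w}^*\in\arg\min_{\bm{w}\in\mathbb{R}^d}f(\bm{w})$, fix $k>1$ and set $G_{\mathcal{Z}}=\left(\frac1n\sum_{i=1}^n G(\bm{x}_i,y_i)^k\right)^{1/k}$. Run unconstrained DP-SGD with constant step size $\eta$, clip norm $\tau$ and noise variance $\sigma_n^2=\frac{\nu T\log(1/\delta)\tau^2}{n^2\varepsilon^2}$. Then for any $0<t<T$, $$\mathbb{E}[\|\bm{w}_t-\bm{w}^*\|]\le\|\bm{w}_0-\bm{w}^*\|+\eta T\left(G_{\mathcal{Z}}+\tau\sqrt{\frac{\nu d\log(1/\delta)}{n^2\varepsilon^2}}\right).$$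
   Context: For $\bm{z}\in\mathbb{R}^d$ and $c>0$, $\mathrm{clip}(\bm{z},c)=\bm{z}\min(1,c/\|\bm{z}\|)$ ($\|\cdot\|$ Euclidean). Unconstrained DP-SGD: given $\bm{w}_0\in\mathbb{R}^d$, $T$, step size $\eta$, a parameter $b\ge1$, clip norm $\tau$, noise variance $\sigma_n^2$: for $t=0,\dots,T-1$, form $\mathcal{S}_t\subseteq[n]$ by including each index independently with probability $b/n$; $\bm{g}_t=\frac1b\sum_{i\in\mathcal{S}_t}\mathrm{clip}(\nabla f_i(\bm{w}_t),\tau)+\bm{\zeta}_t$ with $\bm{\zeta}_t\sim\mathcal{N}(\bm{0},\sigma_n^2I_d)$ independent; $\bm{w}_{t+1}=\bm{w}_t-\eta\bm{g}_t$. $\varepsilon>0$, $\delta\in(0,1)$, $\nu>0$ a fixed absolute constant. Expectation is over the algorithm's randomness. *)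

theory Defs
  imports "HOL-Analysis.Analysis" "HOL-Probability.Probability"
begin

text \<open>Clipping: clip z c = z * min(1, c / norm z)  (with c/0 = 0, so clip 0 c = 0).\<close>
definition clip :: "'a::real_normed_vector \<Rightarrow> real \<Rightarrow> 'a" where
  "clip z c = (min 1 (c / norm z)) *\<^sub>R z"

definition subsample_measure :: "nat \<Rightarrow> real \<Rightarrow> (nat \<Rightarrow> bool) measure" where
  "subsample_measure n b = measure_pmf (Pi_pmf {..<n} False (\<lambda>_. bernoulli_pmf (b / real n)))"

text \<open>Isotropic Gaussian N(0, sigma^2 I_d) on a Euclidean space (sigma = standard deviation):
  independent N(0, sigma^2) coordinates w.r.t. the orthonormal basis.\<close>
definition gauss_vec :: "real \<Rightarrow> 'a::euclidean_space measure" where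
  "gauss_vec \<sigma> = distr (PiM Basis (\<lambda>_. density lborel (normal_density 0 \<sigma>))) borel
      (\<lambda>z. \<Sum>b\<in>Basis. z b *\<^sub>R b)"

definition dpsgd_space :: "nat \<Rightarrow> real \<Rightarrow> real \<Rightarrow> (nat \<Rightarrow> (nat \<Rightarrow> bool) \<times> 'a::euclidean_space) measure" where
  "dpsgd_space n b \<sigma> = PiM UNIV (\<lambda>_::nat. subsample_measure n b \<Otimes>\<^sub>M gauss_vec \<sigma>)"

text \<open>DP-SGD iterates; gr w i is the gradient of f_i at w.\<close>
fun dpsgd_iter :: "('a::euclidean_space \<Rightarrow> nat \<Rightarrow> 'a) \<Rightarrow> nat \<Rightarrow> real \<Rightarrow> real \<Rightarrow> real \<Rightarrow> 'a
      \<Rightarrow> (nat \<Rightarrow> (nat \<Rightarrow> bool) \<times> 'a) \<Rightarrow> nat \<Rightarrow> 'a" where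
  "dpsgd_iter gr n b \<eta> \<tau> w0 \<omega> 0 = w0"
| "dpsgd_iter gr n b \<eta> \<tau> w0 \<omega> (Suc t) =
     (let w = dpsgd_iter gr n b \<eta> \<tau> w0 \<omega> t;
          S = fst (\<omega> t); \<zeta> = snd (\<omega> t);
          g = (1 / b) *\<^sub>R (\<Sum>i\<in>{i. i < n \<and> S i}. clip (gr w i) \<tau>) + \<zeta>
      in w - \<eta> *\<^sub>R g)"

end

theory Submission
  imports Defs
begin


lemma sets_gauss_vec[measurable_cong]: "sets (gauss_vec \<sigma> :: 'a::euclidean_space measure) = sets borel"
  unfolding gauss_vec_def by simp

lemma prob_space_gauss_vec: assumes "\<sigma> > 0" shows "prob_space (gauss_vec \<sigma> :: 'a::euclidean_space measure)"
  unfolding gauss_vec_def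
  apply (rule prob_space.prob_space_distr)
   apply (rule prob_space_PiM)
   apply (rule prob_space_normal_density)
  using assms apply simp
  apply measurable
  done

lemma normal_sq:
  assumes "\<sigma> > 0"
  shows "(\<integral>\<^sup>+ x. ennreal ((c + x)\<^sup>2) \<partial>density lborel (normal_density 0 \<sigma>)) = ennreal (c\<^sup>2 + \<sigma>\<^sup>2)"
proof -
  have h1: "has_bochner_integral lborel (\<lambda>x. normal_density 0 \<sigma> x) 1"
    using normal_moment_even[of \<sigma> 0 0] assms by simp
  have h2: "has_bochner_integral lborel (\<lambda>x. normal_density 0 \<sigma> x * x) 0"
    using normal_moment_odd[of \<sigma> 0 0] assms by simp
  have h3: "has_bochner_integral lborel (\<lambda>x. normal_density 0 \<sigma> x * x\<^sup>2) (\<sigma>\<^sup>2)"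
    using normal_moment_even[of \<sigma> 0 1] assms by (simp add: field_simps power2_eq_square)
  have h: "has_bochner_integral lborel (\<lambda>x. c\<^sup>2 * normal_density 0 \<sigma> x + 2 * c * (normal_density 0 \<sigma> x * x) + normal_density 0 \<sigma> x * x\<^sup>2) (c\<^sup>2 * 1 + 2 * c * 0 + \<sigma>\<^sup>2)"
    by (intro has_bochner_integral_add has_bochner_integral_mult_right h1 h2 h3)
  have eq: "(\<lambda>x. c\<^sup>2 * normal_density 0 \<sigma> x + 2 * c * (normal_density 0 \<sigma> x * x) + normal_density 0 \<sigma> x * x\<^sup>2) = (\<lambda>x. normal_density 0 \<sigma> x * (c + x)\<^sup>2)"
    by (auto simp: power2_eq_square algebra_simps)
  have "(\<integral>\<^sup>+ x. ennreal ((c + x)\<^sup>2) \<partial>density lborel (normal_density 0 \<sigma>)) =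
        (\<integral>\<^sup>+ x. ennreal (normal_density 0 \<sigma> x * (c + x)\<^sup>2) \<partial>lborel)"
    by (subst nn_integral_density) (auto simp: ennreal_mult)
  also have "\<dots> = ennreal (c\<^sup>2 + \<sigma>\<^sup>2)"
    using integrable.intros[OF h] has_bochner_integral_integral_eq[OF h] unfolding eq
    by (subst nn_integral_eq_integral) auto
  finally show ?thesis .
qed

lemma norm_sq_basis:
  fixes v :: "'a::euclidean_space"
  shows "(norm (v + (\<Sum>b\<in>Basis. w b *\<^sub>R b)))\<^sup>2 = (\<Sum>b\<in>Basis. (inner v b + w b)\<^sup>2)"
proof -
  have i: "inner (v + (\<Sum>b\<in>Basis. w b *\<^sub>R b)) c = inner v c + w c" if "c \<in> Basis" for c
    using that by (simp add: inner_add_left inner_sum_left inner_Basis if_distrib sum.delta cong: if_cong)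
  show ?thesis
    unfolding power2_norm_eq_inner
    by (subst euclidean_inner) (simp add: i power2_eq_square)
qed

lemma gauss_sq:
  fixes v :: "'a::euclidean_space"
  assumes "\<sigma> > 0"
  shows "(\<integral>\<^sup>+ z. ennreal ((norm (v + z))\<^sup>2) \<partial>(gauss_vec \<sigma> :: 'a measure)) = ennreal ((norm v)\<^sup>2 + real DIM('a) * \<sigma>\<^sup>2)"
proof -
  define N where "N = density lborel (normal_density 0 \<sigma>)"
  have pN: "prob_space N" unfolding N_def using prob_space_normal_density assms by simp
  interpret product_prob_space "\<lambda>_. N" "Basis :: 'a set"
    by (simp add: product_prob_space_def product_sigma_finite_def prob_space_imp_sigma_finite pN
       product_prob_space_axioms_def)
  have "(\<integral>\<^sup>+ z. ennreal ((norm (v + z))\<^sup>2) \<partial>(gauss_vec \<sigma> :: 'a measure))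
      = (\<integral>\<^sup>+ w. ennreal ((norm (v + (\<Sum>b\<in>Basis. w b *\<^sub>R b)))\<^sup>2) \<partial>PiM Basis (\<lambda>_. N))"
    unfolding gauss_vec_def N_def
    by (subst nn_integral_distr) (auto intro!: nn_integral_cong)
  also have "\<dots> = (\<integral>\<^sup>+ w. (\<Sum>b\<in>Basis. ennreal ((inner v b + w b)\<^sup>2)) \<partial>PiM Basis (\<lambda>_. N))"
    by (simp add: norm_sq_basis)
  also have "\<dots> = (\<Sum>b\<in>Basis. (\<integral>\<^sup>+ w. ennreal ((inner v b + w b)\<^sup>2) \<partial>PiM Basis (\<lambda>_. N)))"
    proof (rule nn_integral_sum)
    fix b :: 'a assume b: "b \<in> Basis"
    have "(\<lambda>w. w b) \<in> measurable (PiM Basis (\<lambda>_. N)) N"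
      using b by (rule measurable_component_singleton)
    then have m: "(\<lambda>w. w b) \<in> borel_measurable (PiM Basis (\<lambda>_. N))"
      by (simp add: N_def)
    show "(\<lambda>w. ennreal ((inner v b + w b)\<^sup>2)) \<in> borel_measurable (PiM Basis (\<lambda>_. N))"
      using m by measurable
  qed
  also have "\<dots> = (\<Sum>b\<in>Basis. ennreal ((inner v b)\<^sup>2 + \<sigma>\<^sup>2))"
  proof (rule sum.cong[OF refl])
    fix b :: 'a assume b: "b \<in> Basis"
    have "(\<integral>\<^sup>+ w. ennreal ((inner v b + w b)\<^sup>2) \<partial>PiM Basis (\<lambda>_. N))
        = (\<integral>\<^sup>+ x. ennreal ((inner v b + x)\<^sup>2) \<partial>distr (PiM Basis (\<lambda>_. N)) N (\<lambda>w. w b))"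
      using b by (subst nn_integral_distr) (auto simp: N_def)
    also have "\<dots> = (\<integral>\<^sup>+ x. ennreal ((inner v b + x)\<^sup>2) \<partial>N)"
      using PiM_component[OF b] by simp
    also have "\<dots> = ennreal ((inner v b)\<^sup>2 + \<sigma>\<^sup>2)"
      unfolding N_def by (rule normal_sq[OF assms])
    finally show "(\<integral>\<^sup>+ w. ennreal ((inner v b + w b)\<^sup>2) \<partial>PiM Basis (\<lambda>_. N)) = ennreal ((inner v b)\<^sup>2 + \<sigma>\<^sup>2)" .
  qed
  also have "\<dots> = ennreal (\<Sum>b\<in>Basis. (inner v b)\<^sup>2 + \<sigma>\<^sup>2)"
    by (rule sum_ennreal) simp
  also have "(\<Sum>b\<in>Basis. (inner v b)\<^sup>2 + \<sigma>\<^sup>2) = (norm v)\<^sup>2 + real DIM('a) * \<sigma>\<^sup>2"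
  proof -
    have nv: "(\<Sum>b\<in>Basis. (inner v b)\<^sup>2) = (norm v)\<^sup>2"
      unfolding power2_norm_eq_inner by (subst (2) euclidean_inner) (simp add: power2_eq_square)
    show ?thesis by (simp add: sum.distrib nv)
  qed
  finally show ?thesis .
qed

lemma fin_sum_sq:
  fixes f :: "'p \<Rightarrow> 'a::euclidean_space"
  assumes Pp: "prob_space P" and f[measurable]: "f \<in> borel_measurable P"
    and h: "\<And>v. (\<integral>\<^sup>+ p. ennreal ((norm (v + f p))\<^sup>2) \<partial>P) = ennreal ((norm v)\<^sup>2 + c)"
    and c: "c \<ge> 0" and I: "finite I"
  shows "(\<integral>\<^sup>+ \<omega>. ennreal ((norm (\<Sum>s\<in>I. f (\<omega> s)))\<^sup>2) \<partial>PiM I (\<lambda>_. P)) = ennreal (real (card I) * c)"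
  using I
proof (induction I rule: finite_induct)
  case empty
  then show ?case by simp
next
  case (insert i I)
  interpret product_prob_space "\<lambda>_. P" "insert i I"
    by (simp add: product_prob_space_def product_sigma_finite_def prob_space_imp_sigma_finite Pp
       product_prob_space_axioms_def)
  have pI: "prob_space (PiM I (\<lambda>_. P))" by (rule prob_space_PiM) (rule Pp)
  have "(\<integral>\<^sup>+ \<omega>. ennreal ((norm (\<Sum>s\<in>insert i I. f (\<omega> s)))\<^sup>2) \<partial>PiM (insert i I) (\<lambda>_. P))
     = (\<integral>\<^sup>+ x. \<integral>\<^sup>+ y. ennreal ((norm (\<Sum>s\<in>insert i I. f ((x(i := y)) s)))\<^sup>2) \<partial>P \<partial>PiM I (\<lambda>_. P))"
    by (rule product_nn_integral_insert) (use insert in auto)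
  also have "\<dots> = (\<integral>\<^sup>+ x. ennreal ((norm (\<Sum>s\<in>I. f (x s)))\<^sup>2) + ennreal c \<partial>PiM I (\<lambda>_. P))"
  proof (rule nn_integral_cong)
    fix x
    have e: "(\<Sum>s\<in>insert i I. f ((x(i := y)) s)) = (\<Sum>s\<in>I. f (x s)) + f y" for y
      using insert by (simp add: add.commute) (intro sum.cong, auto)
    show "(\<integral>\<^sup>+ y. ennreal ((norm (\<Sum>s\<in>insert i I. f ((x(i := y)) s)))\<^sup>2) \<partial>P)
       = ennreal ((norm (\<Sum>s\<in>I. f (x s)))\<^sup>2) + ennreal c"
      unfolding e h using c by (simp add: ennreal_plus)
  qed
  also have "\<dots> = (\<integral>\<^sup>+ x. ennreal ((norm (\<Sum>s\<in>I. f (x s)))\<^sup>2) \<partial>PiM I (\<lambda>_. P)) + ennreal c"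
    using prob_space.emeasure_space_1[OF pI]
    by (subst nn_integral_add) auto
  also have "\<dots> = ennreal (real (card (insert i I)) * c)"
    using insert c by (simp add: ennreal_plus[symmetric] algebra_simps del: ennreal_plus)
  finally show ?case .
qed



lemma prob_space_P:
  assumes "\<sigma> > 0"
  shows "prob_space (subsample_measure n b \<Otimes>\<^sub>M (gauss_vec \<sigma> :: 'a::euclidean_space measure))"
  unfolding subsample_measure_def
  by (intro prob_space_pair prob_space_measure_pmf prob_space_gauss_vec assms)

lemma pair_snd_sq:
  fixes v :: "'a::euclidean_space"
  assumes "\<sigma> > 0"
  shows "(\<integral>\<^sup>+ p. ennreal ((norm (v + snd p))\<^sup>2) \<partial>(subsample_measure n b \<Otimes>\<^sub>M (gauss_vec \<sigma> :: 'a measure)))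
     = ennreal ((norm v)\<^sup>2 + real DIM('a) * \<sigma>\<^sup>2)"
proof -
  interpret G: prob_space "gauss_vec \<sigma> :: 'a measure" by (rule prob_space_gauss_vec[OF assms])
  have "(\<integral>\<^sup>+ p. ennreal ((norm (v + snd p))\<^sup>2) \<partial>(subsample_measure n b \<Otimes>\<^sub>M (gauss_vec \<sigma> :: 'a measure)))
      = (\<integral>\<^sup>+ x. \<integral>\<^sup>+ y. ennreal ((norm (v + snd (x, y)))\<^sup>2) \<partial>(gauss_vec \<sigma> :: 'a measure) \<partial>subsample_measure n b)"
    by (rule G.nn_integral_fst[symmetric]) measurable
  also have "\<dots> = (\<integral>\<^sup>+ x. ennreal ((norm v)\<^sup>2 + real DIM('a) * \<sigma>\<^sup>2) \<partial>subsample_measure n b)"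
    by (simp add: gauss_sq[OF assms])
  also have "\<dots> = ennreal ((norm v)\<^sup>2 + real DIM('a) * \<sigma>\<^sup>2)"
    by (simp add: subsample_measure_def)
  finally show ?thesis .
qed

lemma noise_sq:
  assumes "\<sigma> > 0"
  shows "(\<integral>\<^sup>+ \<omega>. ennreal ((norm (\<Sum>s<t. snd (\<omega> s)))\<^sup>2) \<partial>(dpsgd_space n b \<sigma> :: (nat \<Rightarrow> (nat \<Rightarrow> bool) \<times> 'a::euclidean_space) measure))
     = ennreal (real t * (real DIM('a) * \<sigma>\<^sup>2))"
proof -
  let ?P = "subsample_measure n b \<Otimes>\<^sub>M (gauss_vec \<sigma> :: 'a measure)"
  have Pp: "prob_space ?P" by (rule prob_space_P[OF assms])
  interpret product_prob_space "\<lambda>_. ?P" UNIV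
    by (simp add: product_prob_space_def product_sigma_finite_def prob_space_imp_sigma_finite Pp
       product_prob_space_axioms_def)
  have fin: "(\<integral>\<^sup>+ \<omega>. ennreal ((norm (\<Sum>s\<in>{..<t}. snd (\<omega> s)))\<^sup>2) \<partial>PiM {..<t} (\<lambda>_. ?P))
     = ennreal (real (card {..<t}) * (real DIM('a) * \<sigma>\<^sup>2))"
    by (rule fin_sum_sq[OF Pp]) (auto simp: pair_snd_sq[OF assms])
  have "(\<integral>\<^sup>+ \<omega>. ennreal ((norm (\<Sum>s\<in>{..<t}. snd (\<omega> s)))\<^sup>2) \<partial>PiM {..<t} (\<lambda>_. ?P))
     = (\<integral>\<^sup>+ \<omega>. ennreal ((norm (\<Sum>s\<in>{..<t}. snd (\<omega> s)))\<^sup>2) \<partial>distr (PiM UNIV (\<lambda>_. ?P)) (PiM {..<t} (\<lambda>_. ?P)) (\<lambda>x. restrict x {..<t}))"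
    by (subst distr_PiM_restrict_finite) auto
  also have "\<dots> = (\<integral>\<^sup>+ \<omega>. ennreal ((norm (\<Sum>s\<in>{..<t}. snd (restrict \<omega> {..<t} s)))\<^sup>2) \<partial>PiM UNIV (\<lambda>_. ?P))"
    by (subst nn_integral_distr) (auto intro!: measurable_restrict_subset)
  also have "\<dots> = (\<integral>\<^sup>+ \<omega>. ennreal ((norm (\<Sum>s<t. snd (\<omega> s)))\<^sup>2) \<partial>PiM UNIV (\<lambda>_. ?P))"
    by (intro nn_integral_cong arg_cong[where f=ennreal] arg_cong[where f="\<lambda>x. (norm x)\<^sup>2"] sum.cong) auto
  finally show ?thesis using fin unfolding dpsgd_space_def by simp
qed

lemma ennreal_cmult_plus:
  assumes "k \<ge> 0" "a \<ge> 0" "b \<ge> 0"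
  shows "ennreal k * (ennreal a + ennreal b) = ennreal (k * (a + b))"
proof -
  have h2: "a + b \<ge> 0" using assms by simp
  show ?thesis by (simp only: ennreal_mult[OF assms(1) h2] ennreal_plus[OF assms(2,3)])
qed

lemma am_gm_int:
  assumes M: "prob_space M" and f[measurable]: "f \<in> borel_measurable M" and nn: "\<And>x. f x \<ge> 0"
    and sq: "(\<integral>\<^sup>+ x. ennreal ((f x)\<^sup>2) \<partial>M) = ennreal (c\<^sup>2)" and c: "c > 0"
  shows "(\<integral>\<^sup>+ x. ennreal (f x) \<partial>M) \<le> ennreal c"
proof -
  have pw: "ennreal (f x) \<le> ennreal (1 / (2 * c)) * (ennreal ((f x)\<^sup>2) + ennreal (c\<^sup>2))" for x
  proof -
    have "0 \<le> (f x - c)\<^sup>2" by simp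
    then have "2 * c * f x \<le> (f x)\<^sup>2 + c\<^sup>2" unfolding power2_diff by (simp add: mult.commute mult.left_commute)
    then have "f x \<le> 1 / (2 * c) * ((f x)\<^sup>2 + c\<^sup>2)"
      using c by (simp add: pos_le_divide_eq mult.commute)
    moreover have "ennreal (1 / (2 * c)) * (ennreal ((f x)\<^sup>2) + ennreal (c\<^sup>2)) = ennreal (1 / (2 * c) * ((f x)\<^sup>2 + c\<^sup>2))"
      using c by (intro ennreal_cmult_plus) auto
    ultimately show ?thesis by (simp add: ennreal_leI)
  qed
  have "(\<integral>\<^sup>+ x. ennreal (f x) \<partial>M) \<le> (\<integral>\<^sup>+ x. ennreal (1 / (2 * c)) * (ennreal ((f x)\<^sup>2) + ennreal (c\<^sup>2)) \<partial>M)"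
    by (rule nn_integral_mono) (rule pw)
  also have "\<dots> = ennreal (1 / (2 * c)) * ((\<integral>\<^sup>+ x. ennreal ((f x)\<^sup>2) \<partial>M) + ennreal (c\<^sup>2))"
    using prob_space.emeasure_space_1[OF M]
    by (subst nn_integral_cmult) (auto simp: nn_integral_add)
  also have "\<dots> = ennreal (1 / (2 * c) * (c\<^sup>2 + c\<^sup>2))"
    unfolding sq using c by (intro ennreal_cmult_plus) auto
  also have "1 / (2 * c) * (c\<^sup>2 + c\<^sup>2) = c"
    using c by (simp add: power2_eq_square field_simps)
  finally show ?thesis .
qed

lemma bern_le: "p \<ge> 0 \<Longrightarrow> pmf (bernoulli_pmf p) True \<le> p"
  by (cases "p \<le> 1") (auto intro: order_trans[OF pmf_le_1])

lemma subs_int: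
  fixes g :: "nat \<Rightarrow> real"
  assumes g: "\<And>i. g i \<ge> 0" and b: "b \<ge> 0"
  shows "(\<integral>\<^sup>+ q. ennreal (\<Sum>i<n. if q i then g i else 0) \<partial>subsample_measure n b) \<le> ennreal (b / real n * (\<Sum>i<n. g i))"
proof -
  define S where "S = Pi_pmf {..<n} False (\<lambda>_. bernoulli_pmf (b / real n))"
  have pr: "measure_pmf.prob S {q. q i} \<le> b / real n" if i: "i < n" for i
  proof -
    have "measure_pmf.prob S {q. q i} = measure_pmf.prob (map_pmf (\<lambda>q. q i) S) {True}"
      by (simp add: measure_map_pmf vimage_def)
    also have "\<dots> = pmf (bernoulli_pmf (b / real n)) True"
      using i unfolding S_def by (simp add: Pi_pmf_component measure_pmf_single)
    also have "\<dots> \<le> b / real n" using b by (intro bern_le) simp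
    finally show ?thesis .
  qed
  have "(\<integral>\<^sup>+ q. ennreal (\<Sum>i<n. if q i then g i else 0) \<partial>subsample_measure n b)
      = (\<integral>\<^sup>+ q. (\<Sum>i<n. ennreal (g i) * indicator {q. q i} q) \<partial>measure_pmf S)"
    unfolding subsample_measure_def S_def
  proof (intro nn_integral_cong)
    fix q :: "nat \<Rightarrow> bool"
    have "ennreal (\<Sum>i<n. if q i then g i else 0) = (\<Sum>i<n. ennreal (if q i then g i else 0))"
      by (rule sum_ennreal[symmetric]) (simp add: g)
    also have "\<dots> = (\<Sum>i<n. ennreal (g i) * indicator {q. q i} q)"
      by (intro sum.cong) (auto simp: indicator_def)
    finally show "ennreal (\<Sum>i<n. if q i then g i else 0) = (\<Sum>i<n. ennreal (g i) * indicator {q. q i} q)" .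
  qed
  also have "\<dots> = (\<Sum>i<n. ennreal (g i) * emeasure (measure_pmf S) {q. q i})"
    by (subst nn_integral_sum) (auto simp: nn_integral_cmult_indicator)
  also have "\<dots> \<le> (\<Sum>i<n. ennreal (g i * (b / real n)))"
  proof (rule sum_mono)
    fix i assume "i \<in> {..<n}"
    then have "emeasure (measure_pmf S) {q. q i} \<le> ennreal (b / real n)"
      using pr by (simp add: measure_pmf.emeasure_eq_measure ennreal_leI)
    then show "ennreal (g i) * emeasure (measure_pmf S) {q. q i} \<le> ennreal (g i * (b / real n))"
    proof -
      have "ennreal (g i) * emeasure (measure_pmf S) {q. q i} \<le> ennreal (g i) * ennreal (b / real n)"
        by (rule mult_left_mono[OF \<open>emeasure (measure_pmf S) {q. q i} \<le> ennreal (b / real n)\<close>]) simp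
      also have "\<dots> = ennreal (g i * (b / real n))"
        using g[of i] b by (intro ennreal_mult[symmetric]) auto
      finally show ?thesis .
    qed
  qed
  also have "\<dots> = ennreal (b / real n * (\<Sum>i<n. g i))"
    using g b by (simp add: sum_distrib_left sum_divide_distrib mult.commute)
  finally show ?thesis .
qed

lemma clip_norm_le: assumes "\<tau> > 0" shows "norm (clip z \<tau>) \<le> norm z"
proof -
  have a0: "0 \<le> min 1 (\<tau> / norm z)" using assms by (simp add: less_imp_le divide_nonneg_nonneg)
  have a1: "min 1 (\<tau> / norm z) \<le> 1" by simp
  have "norm (clip z \<tau>) = min 1 (\<tau> / norm z) * norm z"
    unfolding clip_def using a0 by simp
  also have "\<dots> \<le> norm z" using a0 a1 by (intro mult_left_le_one_le) auto
  finally show ?thesis .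
qed

lemma powr_convex0: assumes k: "k \<ge> 1" shows "convex_on {0..} (\<lambda>x::real. x powr k)"
proof (rule convex_onI)
  show "convex {0::real..}" by simp
  fix t x y :: real assume t: "0 < t" "t < 1" and x: "x \<in> {0..}" and y: "y \<in> {0..}"
  show "((1 - t) *\<^sub>R x + t *\<^sub>R y) powr k \<le> (1 - t) * x powr k + t * y powr k"
  proof (cases "x = 0 \<or> y = 0")
    case False
    then have "x \<in> {0<..}" "y \<in> {0<..}" using x y by auto
    then show ?thesis using powr_convex[OF k] t
      unfolding convex_on_def by (auto)
  next
    case True
    have le: "s powr k \<le> s" if "0 \<le> s" "s \<le> 1" for s :: real
      using that k powr_le_one_le[of s k] by (cases "s = 0") auto
    show ?thesis
    proof (cases "x = 0")
      case True
      have "(t * y) powr k = t powr k * y powr k" by (rule powr_mult)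
      also have "\<dots> \<le> t * y powr k" using le[of t] t by (intro mult_right_mono) auto
      finally show ?thesis using True k by simp
    next
      case False
      then have y0: "y = 0" using True by simp
      have "((1 - t) * x) powr k = (1 - t) powr k * x powr k" by (rule powr_mult)
      also have "\<dots> \<le> (1 - t) * x powr k" using le[of "1 - t"] t by (intro mult_right_mono) auto
      finally show ?thesis using y0 k by simp
    qed
  qed
qed

lemma power_mean:
  fixes g :: "nat \<Rightarrow> real"
  assumes k: "k \<ge> 1" and n: "n \<ge> 1" and g: "\<And>i. g i \<ge> 0"
  shows "(1 / real n) * (\<Sum>i<n. g i) \<le> ((1 / real n) * (\<Sum>i<n. g i powr k)) powr (1 / k)"
proof -
  have "(\<Sum>i<n. (1 / real n) *\<^sub>R g i) powr k \<le> (\<Sum>i<n. (1 / real n) * g i powr k)"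
    by (rule convex_on_sum[OF _ _ powr_convex0[OF k]]) (use n g in \<open>auto simp: lessThan_empty_iff\<close>)
  then have J: "((1 / real n) * (\<Sum>i<n. g i)) powr k \<le> (1 / real n) * (\<Sum>i<n. g i powr k)"
    by (simp add: sum_distrib_left)
  have nn: "0 \<le> (1 / real n) * (\<Sum>i<n. g i)" using g by (simp add: sum_nonneg)
  have "(1 / real n) * (\<Sum>i<n. g i) = (((1 / real n) * (\<Sum>i<n. g i)) powr k) powr (1 / k)"
    using k nn g by (simp add: powr_powr powr_one sum_nonneg)
  also have "\<dots> \<le> ((1 / real n) * (\<Sum>i<n. g i powr k)) powr (1 / k)"
    using J k by (intro powr_mono2) auto
  finally show ?thesis .
qed

lemma iter_expand:
  "dpsgd_iter gr n b \<eta> \<tau> w0 \<omega> t = w0 - \<eta> *\<^sub>R (\<Sum>s<t. (1 / b) *\<^sub>R (\<Sum>i\<in>{i. i < n \<and> fst (\<omega> s) i}. clip (gr (dpsgd_iter gr n b \<eta> \<tau> w0 \<omega> s) i) \<tau>) + snd (\<omega> s))"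
  by (induction t) (simp_all add: Let_def algebra_simps)

theorem mainTheorem10:
  fixes loss :: "'a::euclidean_space \<Rightarrow> 'x \<Rightarrow> 'y \<Rightarrow> real"
    and grad_loss :: "'a \<Rightarrow> 'x \<Rightarrow> 'y \<Rightarrow> 'a"
    and G :: "'x \<Rightarrow> 'y \<Rightarrow> real"
    and X :: "nat \<Rightarrow> 'x" and Y :: "nat \<Rightarrow> 'y"
    and n T t :: nat
    and w0 wstar :: 'a
    and k \<eta> \<tau> b \<epsilon> \<delta> \<nu> :: real
  assumes diff: "\<And>w x y. GDERIV (\<lambda>v. loss v x y) w :> grad_loss w x y"
    and Gnn: "\<And>x y. G x y \<ge> 0"
    and Gbound: "\<And>w x y. norm (grad_loss w x y) \<le> G x y"
    and n_pos: "n \<ge> 1"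
    and argmin: "\<And>w. (1 / real n) * (\<Sum>i<n. loss wstar (X i) (Y i))
                      \<le> (1 / real n) * (\<Sum>i<n. loss w (X i) (Y i))"
    and k_gt: "k > 1"
    and b_ge: "b \<ge> 1"
    and eta_pos: "\<eta> > 0"
    and tau_pos: "\<tau> > 0"
    and eps_pos: "\<epsilon> > 0"
    and delta: "0 < \<delta>" "\<delta> < 1"
    and nu_pos: "\<nu> > 0"
    and t_range: "0 < t" "t < T"
  shows
    "(\<integral>\<^sup>+ \<omega>. ennreal (norm (dpsgd_iter (\<lambda>w i. grad_loss w (X i) (Y i)) n b \<eta> \<tau> w0 \<omega> t - wstar))
        \<partial>(dpsgd_space n b
             (sqrt (\<nu> * real T * ln (1 / \<delta>) * \<tau>\<^sup>2 / ((real n)\<^sup>2 * \<epsilon>\<^sup>2)))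
             :: (nat \<Rightarrow> (nat \<Rightarrow> bool) \<times> 'a) measure))
     \<le> ennreal (norm (w0 - wstar)
        + \<eta> * real T * (((1 / real n) * (\<Sum>i<n. G (X i) (Y i) powr k)) powr (1 / k)
            + \<tau> * sqrt (\<nu> * real DIM('a) * ln (1 / \<delta>) / ((real n)\<^sup>2 * \<epsilon>\<^sup>2))))"
proof -
  define \<sigma> where "\<sigma> = sqrt (\<nu> * real T * ln (1 / \<delta>) * \<tau>\<^sup>2 / ((real n)\<^sup>2 * \<epsilon>\<^sup>2))"
  define D where "D = real DIM('a)"
  define gr where "gr = (\<lambda>w i. grad_loss w (X i) (Y i))"
  define g where "g = (\<lambda>i. G (X i) (Y i))"
  define H where "H = (\<lambda>q::nat\<Rightarrow>bool. \<Sum>i<n. if q i then g i else 0)"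
  define V where "V = (\<lambda>\<omega>::nat \<Rightarrow> (nat\<Rightarrow>bool) \<times> 'a. \<Sum>s<t. snd (\<omega> s))"
  define W where "W = (\<lambda>\<omega>. dpsgd_iter gr n b \<eta> \<tau> w0 \<omega> t)"
  define a0 where "a0 = norm (w0 - wstar)"
  define avg where "avg = (1 / real n) * (\<Sum>i<n. g i)"
  define c where "c = sqrt (real t * (D * \<sigma>\<^sup>2))"
  let ?S = "subsample_measure n b"
  let ?P = "?S \<Otimes>\<^sub>M (gauss_vec \<sigma> :: 'a measure)"
  let ?M = "dpsgd_space n b \<sigma> :: (nat \<Rightarrow> (nat \<Rightarrow> bool) \<times> 'a) measure"
  have L: "ln (1 / \<delta>) > 0" using delta by simp
  have Tpos: "real T > 0" using t_range by simp
  have npos: "real n > 0" using n_pos by simp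
  have \<sigma>pos: "\<sigma> > 0" unfolding \<sigma>_def
    using L Tpos npos eps_pos nu_pos tau_pos by (intro real_sqrt_gt_zero divide_pos_pos mult_pos_pos) auto
  have Dpos: "D > 0" unfolding D_def by simp
  have cpos: "c > 0" unfolding c_def using \<sigma>pos Dpos t_range by simp
  have g0: "\<And>i. g i \<ge> 0" unfolding g_def by (rule Gnn)
  have H0: "\<And>q. H q \<ge> 0" unfolding H_def using g0 by (simp add: sum_nonneg)
  have b0: "b > 0" using b_ge by simp
  have Pp: "prob_space ?P" by (rule prob_space_P[OF \<sigma>pos])
  interpret product_prob_space "\<lambda>_. ?P" UNIV
    by (simp add: product_prob_space_def product_sigma_finite_def prob_space_imp_sigma_finite Pp
       product_prob_space_axioms_def)
  have Mp: "prob_space ?M" unfolding dpsgd_space_def by (rule prob_space_PiM) (rule Pp)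
  interpret G: prob_space "gauss_vec \<sigma> :: 'a measure" by (rule prob_space_gauss_vec[OF \<sigma>pos])

  have pw: "norm (W \<omega> - wstar) \<le> a0 + (\<Sum>s<t. \<eta> / b * H (fst (\<omega> s))) + \<eta> * norm (V \<omega>)" for \<omega>
  proof -
    define A where "A = (\<lambda>s. (1 / b) *\<^sub>R (\<Sum>i\<in>{i. i < n \<and> fst (\<omega> s) i}. clip (gr (dpsgd_iter gr n b \<eta> \<tau> w0 \<omega> s) i) \<tau>))"
    have Wexp: "W \<omega> - wstar = (w0 - wstar) - \<eta> *\<^sub>R (\<Sum>s<t. A s) - \<eta> *\<^sub>R V \<omega>"
      unfolding W_def V_def A_def
      by (subst iter_expand) (simp add: sum.distrib algebra_simps scaleR_right_distrib)
    have Ab: "norm (A s) \<le> (1 / b) * H (fst (\<omega> s))" for s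
    proof -
      have "norm (\<Sum>i\<in>{i. i < n \<and> fst (\<omega> s) i}. clip (gr (dpsgd_iter gr n b \<eta> \<tau> w0 \<omega> s) i) \<tau>)
          \<le> (\<Sum>i\<in>{i. i < n \<and> fst (\<omega> s) i}. norm (clip (gr (dpsgd_iter gr n b \<eta> \<tau> w0 \<omega> s) i) \<tau>))"
        by (rule norm_sum)
      also have "\<dots> \<le> (\<Sum>i\<in>{i. i < n \<and> fst (\<omega> s) i}. g i)"
        by (intro sum_mono order_trans[OF clip_norm_le[OF tau_pos]]) (simp add: gr_def g_def Gbound)
      also have "\<dots> = H (fst (\<omega> s))"
      proof -
        show ?thesis unfolding H_def using sum.inter_filter[of "{..<n}" g "fst (\<omega> s)"] by simp
      qed
      finally show ?thesis unfolding A_def using b0 by (simp add: divide_right_mono)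
    qed
    have "norm (W \<omega> - wstar) \<le> a0 + norm (\<eta> *\<^sub>R (\<Sum>s<t. A s)) + norm (\<eta> *\<^sub>R V \<omega>)"
      unfolding Wexp a0_def by (smt (verit) norm_triangle_ineq4)
    also have "norm (\<eta> *\<^sub>R (\<Sum>s<t. A s)) \<le> \<eta> * (\<Sum>s<t. norm (A s))"
      using eta_pos by (simp add: norm_sum)
    also have "\<dots> \<le> \<eta> * (\<Sum>s<t. (1 / b) * H (fst (\<omega> s)))"
      using eta_pos by (intro mult_left_mono sum_mono Ab) auto
    also have "\<dots> = (\<Sum>s<t. \<eta> / b * H (fst (\<omega> s)))"
      by (simp add: sum_distrib_left)
    also have "norm (\<eta> *\<^sub>R V \<omega>) = \<eta> * norm (V \<omega>)" using eta_pos by simp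
    finally show ?thesis by simp
  qed
  have comp: "(\<lambda>\<omega>. \<omega> s) \<in> measurable ?M ?P" for s
    unfolding dpsgd_space_def by (rule measurable_component_singleton) simp
  have HPm: "(\<lambda>p. ennreal (H (fst p))) \<in> borel_measurable ?P"
    by (rule measurable_compose[OF measurable_fst]) (simp add: subsample_measure_def)
  have Hm: "(\<lambda>\<omega>. ennreal (H (fst (\<omega> s)))) \<in> borel_measurable ?M" for s
    using HPm measurable_compose[OF comp] by blast
  have sndm: "(\<lambda>\<omega>. snd (\<omega> s)) \<in> borel_measurable ?M" for s
  proof -
    have "snd \<in> measurable ?P (gauss_vec \<sigma> :: 'a measure)" by (rule measurable_snd)
    then have "snd \<in> borel_measurable ?P"
      unfolding measurable_cong_sets[OF refl sets_gauss_vec[of \<sigma>, where 'a='a]] .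
    then show ?thesis using measurable_compose[OF comp] by blast
  qed
  have Vm: "V \<in> borel_measurable ?M"
    unfolding V_def by (rule borel_measurable_sum) (rule sndm)
  have Hint: "(\<integral>\<^sup>+ \<omega>. ennreal (H (fst (\<omega> s))) \<partial>?M) \<le> ennreal (b / real n * (\<Sum>i<n. g i))" for s
  proof -
    have "(\<integral>\<^sup>+ \<omega>. ennreal (H (fst (\<omega> s))) \<partial>?M) = (\<integral>\<^sup>+ p. ennreal (H (fst p)) \<partial>distr ?M ?P (\<lambda>\<omega>. \<omega> s))"
      using HPm by (subst nn_integral_distr[OF comp]) simp_all
    also have "distr ?M ?P (\<lambda>\<omega>. \<omega> s) = ?P"
      unfolding dpsgd_space_def by (rule PiM_component) simp
    also have "(\<integral>\<^sup>+ p. ennreal (H (fst p)) \<partial>?P) = (\<integral>\<^sup>+ q. ennreal (H q) \<partial>distr ?P ?S fst)"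
      by (subst nn_integral_distr[OF measurable_fst]) (simp_all add: subsample_measure_def)
    also have "distr ?P ?S fst = ?S" by (rule G.distr_pair_fst)
    also have "(\<integral>\<^sup>+ q. ennreal (H q) \<partial>?S) \<le> ennreal (b / real n * (\<Sum>i<n. g i))"
      unfolding H_def by (rule subs_int) (use g0 b0 in auto)
    finally show ?thesis .
  qed
  have Vint: "(\<integral>\<^sup>+ \<omega>. ennreal (norm (V \<omega>)) \<partial>?M) \<le> ennreal c"
  proof (rule am_gm_int[OF Mp])
    show "(\<lambda>\<omega>. norm (V \<omega>)) \<in> borel_measurable ?M" using Vm by measurable
    show "(\<integral>\<^sup>+ \<omega>. ennreal ((norm (V \<omega>))\<^sup>2) \<partial>?M) = ennreal (c\<^sup>2)"
      unfolding V_def c_def D_def using \<sigma>pos by (simp add: noise_sq)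
  qed (use cpos in auto)
  have "(\<integral>\<^sup>+ \<omega>. ennreal (norm (W \<omega> - wstar)) \<partial>?M)
      \<le> (\<integral>\<^sup>+ \<omega>. ennreal a0 + ((\<Sum>s<t. ennreal (\<eta> / b) * ennreal (H (fst (\<omega> s)))) + ennreal \<eta> * ennreal (norm (V \<omega>))) \<partial>?M)"
  proof (rule nn_integral_mono)
    fix \<omega> :: "nat \<Rightarrow> (nat \<Rightarrow> bool) \<times> 'a"
    have e1: "ennreal (\<Sum>s<t. \<eta> / b * H (fst (\<omega> s))) = (\<Sum>s<t. ennreal (\<eta> / b) * ennreal (H (fst (\<omega> s))))"
    proof -
      have "(\<Sum>s<t. ennreal (\<eta> / b) * ennreal (H (fst (\<omega> s)))) = (\<Sum>s<t. ennreal (\<eta> / b * H (fst (\<omega> s))))"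
        using eta_pos b0 H0 by (intro sum.cong refl ennreal_mult[symmetric]) auto
      also have "\<dots> = ennreal (\<Sum>s<t. \<eta> / b * H (fst (\<omega> s)))"
        using eta_pos b0 H0 by (intro sum_ennreal) auto
      finally show ?thesis by (rule sym)
    qed
    have e2: "ennreal (\<eta> * norm (V \<omega>)) = ennreal \<eta> * ennreal (norm (V \<omega>))"
      using eta_pos by (intro ennreal_mult) auto
    have nn1: "0 \<le> (\<Sum>s<t. \<eta> / b * H (fst (\<omega> s)))" using eta_pos b0 H0 by (intro sum_nonneg) simp
    have nn2: "0 \<le> \<eta> * norm (V \<omega>)" using eta_pos by simp
    have "ennreal (norm (W \<omega> - wstar)) \<le> ennreal (a0 + ((\<Sum>s<t. \<eta> / b * H (fst (\<omega> s))) + \<eta> * norm (V \<omega>)))"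
      using pw[of \<omega>] by (intro ennreal_leI) simp
    also have "\<dots> = ennreal a0 + (ennreal (\<Sum>s<t. \<eta> / b * H (fst (\<omega> s))) + ennreal (\<eta> * norm (V \<omega>)))"
      using nn1 nn2 by (simp only: a0_def ennreal_plus norm_ge_zero add_nonneg_nonneg)
    finally show "ennreal (norm (W \<omega> - wstar)) \<le> ennreal a0 + ((\<Sum>s<t. ennreal (\<eta> / b) * ennreal (H (fst (\<omega> s)))) + ennreal \<eta> * ennreal (norm (V \<omega>)))"
      unfolding e1 e2 .
  qed
  also have "\<dots> = ennreal a0 + ((\<Sum>s<t. ennreal (\<eta> / b) * (\<integral>\<^sup>+ \<omega>. ennreal (H (fst (\<omega> s))) \<partial>?M)) + ennreal \<eta> * (\<integral>\<^sup>+ \<omega>. ennreal (norm (V \<omega>)) \<partial>?M))"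
  proof -
    have Vm': "(\<lambda>\<omega>. ennreal (norm (V \<omega>))) \<in> borel_measurable ?M" using Vm by measurable
    have Bm: "(\<lambda>\<omega>. \<Sum>s<t. ennreal (\<eta> / b) * ennreal (H (fst (\<omega> s)))) \<in> borel_measurable ?M"
      by (intro borel_measurable_sum borel_measurable_times_ennreal borel_measurable_const Hm)
    have Cm: "(\<lambda>\<omega>. ennreal \<eta> * ennreal (norm (V \<omega>))) \<in> borel_measurable ?M"
      by (intro borel_measurable_times_ennreal borel_measurable_const Vm')
    have i1: "(\<integral>\<^sup>+ \<omega>. (\<Sum>s<t. ennreal (\<eta> / b) * ennreal (H (fst (\<omega> s)))) \<partial>?M)
        = (\<Sum>s<t. ennreal (\<eta> / b) * (\<integral>\<^sup>+ \<omega>. ennreal (H (fst (\<omega> s))) \<partial>?M))"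
      by (subst nn_integral_sum) (auto intro!: sum.cong nn_integral_cmult borel_measurable_times_ennreal Hm)
    have i2: "(\<integral>\<^sup>+ \<omega>. ennreal \<eta> * ennreal (norm (V \<omega>)) \<partial>?M) = ennreal \<eta> * (\<integral>\<^sup>+ \<omega>. ennreal (norm (V \<omega>)) \<partial>?M)"
      by (rule nn_integral_cmult[OF Vm'])
    have i3: "(\<integral>\<^sup>+ \<omega>. ennreal a0 + ((\<Sum>s<t. ennreal (\<eta> / b) * ennreal (H (fst (\<omega> s)))) + ennreal \<eta> * ennreal (norm (V \<omega>))) \<partial>?M)
       = (\<integral>\<^sup>+ \<omega>. ennreal a0 \<partial>?M) + ((\<integral>\<^sup>+ \<omega>. (\<Sum>s<t. ennreal (\<eta> / b) * ennreal (H (fst (\<omega> s)))) \<partial>?M) + (\<integral>\<^sup>+ \<omega>. ennreal \<eta> * ennreal (norm (V \<omega>)) \<partial>?M))"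
      by (subst nn_integral_add) (auto intro!: borel_measurable_add Bm Cm nn_integral_add)
    have i4: "(\<integral>\<^sup>+ \<omega>. ennreal a0 \<partial>?M) = ennreal a0"
      using prob_space.emeasure_space_1[OF Mp] by simp
    show ?thesis unfolding i3 i4 i1 i2 ..
  qed
  also have "\<dots> \<le> ennreal a0 + ((\<Sum>s<t. ennreal (\<eta> / b) * ennreal (b / real n * (\<Sum>i<n. g i))) + ennreal \<eta> * ennreal c)"
    by (intro add_mono sum_mono mult_left_mono Hint Vint order_refl) auto
  also have "\<dots> = ennreal (a0 + (real t * (\<eta> * avg) + \<eta> * c))"
  proof -
    have sg: "0 \<le> (\<Sum>i<n. g i)" using g0 by (simp add: sum_nonneg)
    have avg0: "0 \<le> avg" unfolding avg_def using sg by simp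
    have r1: "\<eta> / b * (b / real n * (\<Sum>i<n. g i)) = \<eta> * avg"
      using b0 unfolding avg_def by (simp add: field_simps)
    have q1: "ennreal (\<eta> / b) * ennreal (b / real n * (\<Sum>i<n. g i)) = ennreal (\<eta> * avg)"
      unfolding r1[symmetric] using b0 eta_pos sg by (intro ennreal_mult[symmetric]) auto
    have q2: "(\<Sum>s<t. ennreal (\<eta> * avg)) = ennreal (real t * (\<eta> * avg))"
    proof -
      have "(\<Sum>s<t. ennreal (\<eta> * avg)) = ennreal (\<Sum>s<t. \<eta> * avg)"
        using eta_pos avg0 by (intro sum_ennreal) auto
      then show ?thesis by simp
    qed
    have q3: "ennreal \<eta> * ennreal c = ennreal (\<eta> * c)"
      using eta_pos cpos by (intro ennreal_mult[symmetric]) auto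
    have q4: "ennreal a0 + (ennreal (real t * (\<eta> * avg)) + ennreal (\<eta> * c)) = ennreal (a0 + (real t * (\<eta> * avg) + \<eta> * c))"
      using eta_pos cpos avg0 unfolding a0_def by (simp only: ennreal_plus[symmetric] norm_ge_zero add_nonneg_nonneg mult_nonneg_nonneg of_nat_0_le_iff less_imp_le)
    show ?thesis unfolding q1 q2 q3 q4 ..
  qed
  also have "\<dots> \<le> ennreal (norm (w0 - wstar)
        + \<eta> * real T * (((1 / real n) * (\<Sum>i<n. G (X i) (Y i) powr k)) powr (1 / k)
            + \<tau> * sqrt (\<nu> * real DIM('a) * ln (1 / \<delta>) / ((real n)\<^sup>2 * \<epsilon>\<^sup>2))))"
  proof (rule ennreal_leI)
    define GZ where "GZ = ((1 / real n) * (\<Sum>i<n. G (X i) (Y i) powr k)) powr (1 / k)"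
    define K where "K = \<nu> * D * ln (1 / \<delta>) / ((real n)\<^sup>2 * \<epsilon>\<^sup>2)"
    have K0: "K \<ge> 0" unfolding K_def using nu_pos Dpos L by simp
    have avgGZ: "avg \<le> GZ" unfolding avg_def GZ_def g_def
      by (rule power_mean) (use k_gt n_pos Gnn in auto)
    have sg: "0 \<le> (\<Sum>i<n. g i)" using g0 by (simp add: sum_nonneg)
    have avg0: "0 \<le> avg" unfolding avg_def using sg by simp
    have tT: "real t \<le> real T" using t_range by simp
    have A1: "real t * avg \<le> real T * GZ"
      using avgGZ avg0 tT by (intro mult_mono) auto
    have s2: "\<sigma>\<^sup>2 = \<nu> * real T * ln (1 / \<delta>) * \<tau>\<^sup>2 / ((real n)\<^sup>2 * \<epsilon>\<^sup>2)"
      unfolding \<sigma>_def using nu_pos Tpos L by (intro real_sqrt_pow2) simp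
    have ceq: "real t * (D * \<sigma>\<^sup>2) = (real t * real T) * (\<tau>\<^sup>2 * K)"
      unfolding s2 K_def by (simp add: field_simps)
    have "c = sqrt ((real t * real T) * (\<tau>\<^sup>2 * K))" unfolding c_def ceq ..
    also have "\<dots> \<le> sqrt ((real T * real T) * (\<tau>\<^sup>2 * K))"
      using tT K0 by (intro real_sqrt_le_mono mult_right_mono) auto
    also have "\<dots> = real T * \<tau> * sqrt K"
      using tau_pos by (simp add: real_sqrt_mult power2_eq_square)
    finally have A2: "c \<le> real T * \<tau> * sqrt K" .
    have "real t * (\<eta> * avg) + \<eta> * c \<le> \<eta> * (real T * GZ) + \<eta> * (real T * \<tau> * sqrt K)"
      using A1 A2 eta_pos by (simp add: mult.left_commute mult_left_mono add_mono)
    also have "\<dots> = \<eta> * real T * (GZ + \<tau> * sqrt K)" by (simp add: algebra_simps)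
    finally show "a0 + (real t * (\<eta> * avg) + \<eta> * c) \<le> norm (w0 - wstar) + \<eta> * real T * (((1 / real n) * (\<Sum>i<n. G (X i) (Y i) powr k)) powr (1 / k)
            + \<tau> * sqrt (\<nu> * real DIM('a) * ln (1 / \<delta>) / ((real n)\<^sup>2 * \<epsilon>\<^sup>2)))"
      unfolding a0_def GZ_def K_def D_def by simp
  qed
  finally show ?thesis unfolding W_def gr_def \<sigma>_def .
qed

end
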